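(* Let $(A,C,k)$ be an instance and let $W$ be an exhaustive committee that is $B$-priceable for some budget $B\ge k$. Then the representation ratio of $W$ is at least $\frac12$.
   Context: An instance $(A,C,k)$ consists of a finite nonempty candidate set $C$, voters $N=\{1,\dots,n\}$, approval sets $A_i\subseteq C$, and a committee size $1\le k\le|C|$. $N_c=\{i:c\in A_i\}$. A committee $W\subseteq C$ is exhaustive if $|W|=k$. $\mathrm{cov}(W)=|\{i:A_i\cap W\ne\emptyset\}|$; the representation ratio is $\mathrm{cov}(W)/\max\{\mathrm{cov}(W'):|W'|=k\}$. For $B>0$, $W$ is $B$-priceable if there are $p_i:C\to\mathbb{R}_{\ge0}$ ($i\in N$) with: $p_i(c)=0$ for $c\notin A_i$; $\sum_c p_i(c)\le B/n$ for all $i$; $\sum_i p_i(c)=1$ for $c\in W$; $\sum_i p_i(c)=0$ for $c\notin W$; and $\sum_{i\in N_c}\left(\frac Bn-\sum_{c'\in C}p_i(c')\right)\le1$ for every $c\notin W$. *)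

theory Defs
  imports Main Complex_Main
begin

definition is_instance :: "nat \<Rightarrow> (nat \<Rightarrow> 'c set) \<Rightarrow> 'c set \<Rightarrow> nat \<Rightarrow> bool" where
  "is_instance n A C k \<longleftrightarrow> finite C \<and> C \<noteq> {} \<and> n \<ge> 1 \<and>
     (\<forall>i\<in>{1..n}. A i \<subseteq> C) \<and> 1 \<le> k \<and> k \<le> card C"

definition exhaustive :: "'c set \<Rightarrow> nat \<Rightarrow> 'c set \<Rightarrow> bool" where
  "exhaustive C k W \<longleftrightarrow> W \<subseteq> C \<and> card W = k"

definition cov :: "nat \<Rightarrow> (nat \<Rightarrow> 'c set) \<Rightarrow> 'c set \<Rightarrow> nat" where
  "cov n A W = card {i \<in> {1..n}. A i \<inter> W \<noteq> {}}"

definition max_cov :: "nat \<Rightarrow> (nat \<Rightarrow> 'c set) \<Rightarrow> 'c set \<Rightarrow> nat \<Rightarrow> nat" where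
  "max_cov n A C k = Max ((\<lambda>W'. cov n A W') ` {W'. W' \<subseteq> C \<and> card W' = k})"

definition representation_ratio :: "nat \<Rightarrow> (nat \<Rightarrow> 'c set) \<Rightarrow> 'c set \<Rightarrow> nat \<Rightarrow> 'c set \<Rightarrow> real" where
  "representation_ratio n A C k W = real (cov n A W) / real (max_cov n A C k)"

definition priceable :: "nat \<Rightarrow> (nat \<Rightarrow> 'c set) \<Rightarrow> 'c set \<Rightarrow> real \<Rightarrow> 'c set \<Rightarrow> bool" where
  "priceable n A C B W \<longleftrightarrow> B > 0 \<and>
    (\<exists>p :: nat \<Rightarrow> 'c \<Rightarrow> real.
       (\<forall>i\<in>{1..n}. \<forall>c\<in>C. p i c \<ge> 0) \<and>
       (\<forall>i\<in>{1..n}. \<forall>c\<in>C. c \<notin> A i \<longrightarrow> p i c = 0) \<and>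
       (\<forall>i\<in>{1..n}. (\<Sum>c\<in>C. p i c) \<le> B / real n) \<and>
       (\<forall>c\<in>W. (\<Sum>i\<in>{1..n}. p i c) = 1) \<and>
       (\<forall>c\<in>C - W. (\<Sum>i\<in>{1..n}. p i c) = 0) \<and>
       (\<forall>c\<in>C - W. (\<Sum>i\<in>{i\<in>{1..n}. c \<in> A i}. B / real n - (\<Sum>c'\<in>C. p i c')) \<le> 1))"

end

theory Submission
  imports Defs
begin

theorem theorem11:
  fixes n k :: nat and A :: "nat \<Rightarrow> 'c set" and C W :: "'c set" and B :: real
  assumes "is_instance n A C k"
    and "exhaustive C k W"
    and "priceable n A C B W"
    and "B \<ge> real k"
  shows "representation_ratio n A C k W \<ge> 1 / 2"
proof -
  define V where "V = {1..n}"
  define S where "S = {i \<in> V. A i \<inter> W \<noteq> {}}"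
  define U where "U = V - S"
  have fC: "finite C" and n1: "n \<ge> 1" and AC: "\<forall>i\<in>V. A i \<subseteq> C" and k1: "1 \<le> k"
    and kC: "k \<le> card C"
    using assms(1) unfolding is_instance_def V_def by auto
  have WC: "W \<subseteq> C" and cW: "card W = k" using assms(2) unfolding exhaustive_def by auto
  have fW: "finite W" using WC fC finite_subset by blast
  have Bpos: "B > 0" using assms(3) unfolding priceable_def by auto
  obtain p :: "nat \<Rightarrow> 'c \<Rightarrow> real" where
    p0: "\<forall>i\<in>V. \<forall>c\<in>C. p i c \<ge> 0" and
    pA: "\<forall>i\<in>V. \<forall>c\<in>C. c \<notin> A i \<longrightarrow> p i c = 0" and
    pB: "\<forall>i\<in>V. (\<Sum>c\<in>C. p i c) \<le> B / real n" and
    pW: "\<forall>c\<in>W. (\<Sum>i\<in>V. p i c) = 1" and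
    pN: "\<forall>c\<in>C - W. (\<Sum>i\<in>V. p i c) = 0" and
    pL: "\<forall>c\<in>C - W. (\<Sum>i\<in>{i\<in>V. c \<in> A i}. B / real n - (\<Sum>c'\<in>C. p i c')) \<le> 1"
    using assms(3) unfolding priceable_def V_def by blast
  have fV: "finite V" unfolding V_def by simp
  have npos: "real n > 0" using n1 by simp
  have zeroU: "p i c = 0" if "i \<in> U" "c \<in> C" for i c
  proof (cases "c \<in> W")
    case True
    then have "c \<notin> A i" using that unfolding U_def S_def by auto
    then show ?thesis using pA that unfolding U_def by auto
  next
    case False
    have "\<forall>j\<in>V. p j c = 0"
      using pN False that(2) p0 fV sum_nonneg_eq_0_iff[of V "\<lambda>j. p j c"] by auto
    then show ?thesis using that unfolding U_def by auto
  qed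
  have SV: "S \<subseteq> V" unfolding S_def by auto
  have fS: "finite S" using SV fV finite_subset by blast
  have "real k = (\<Sum>c\<in>W. \<Sum>i\<in>V. p i c)" using pW cW by simp
  also have "\<dots> = (\<Sum>i\<in>V. \<Sum>c\<in>W. p i c)" by (rule sum.swap)
  also have "\<dots> = (\<Sum>i\<in>S. \<Sum>c\<in>W. p i c) + (\<Sum>i\<in>U. \<Sum>c\<in>W. p i c)"
    unfolding U_def using sum.subset_diff[OF SV fV] by (simp add: add.commute)
  also have "(\<Sum>i\<in>U. \<Sum>c\<in>W. p i c) = 0" using zeroU WC by (auto intro!: sum.neutral)
  also have "(\<Sum>i\<in>S. \<Sum>c\<in>W. p i c) \<le> (\<Sum>i\<in>S. \<Sum>c\<in>C. p i c)"
  proof (rule sum_mono)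
    fix i assume "i \<in> S"
    then show "(\<Sum>c\<in>W. p i c) \<le> (\<Sum>c\<in>C. p i c)"
      using sum_mono2[OF fC WC] p0 SV by auto
  qed
  also have "\<dots> \<le> (\<Sum>i\<in>S. B / real n)" using pB SV by (intro sum_mono) auto
  finally have kS: "real k \<le> real (card S) * (B / real n)" by simp
  have bnd: "real (card {i\<in>U. c \<in> A i}) \<le> real n / B" if "c \<in> C - W" for c
  proof -
    have sub: "{i\<in>U. c \<in> A i} \<subseteq> {i\<in>V. c \<in> A i}" unfolding U_def by auto
    have nn: "\<forall>i\<in>{i\<in>V. c \<in> A i}. 0 \<le> B / real n - (\<Sum>c'\<in>C. p i c')" using pB by auto
    have "real (card {i\<in>U. c \<in> A i}) * (B / real n) = (\<Sum>i\<in>{i\<in>U. c \<in> A i}. B / real n - (\<Sum>c'\<in>C. p i c'))"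
      using zeroU by simp
    also have "\<dots> \<le> (\<Sum>i\<in>{i\<in>V. c \<in> A i}. B / real n - (\<Sum>c'\<in>C. p i c'))"
      by (rule sum_mono2[OF _ sub]) (use nn fV in auto)
    also have "\<dots> \<le> 1" using pL that by auto
    finally have "real (card {i\<in>U. c \<in> A i}) * B \<le> real n" using npos by (simp add: field_simps)
    then show ?thesis using Bpos by (simp add: field_simps)
  qed
  have covW: "cov n A W = card S" unfolding cov_def S_def V_def by simp
  have covle: "real (cov n A W') \<le> 2 * real (card S)" if "W' \<subseteq> C" "card W' = k" for W'
  proof -
    have fW': "finite W'" using that fC finite_subset by blast
    have "{i \<in> {1..n}. A i \<inter> W' \<noteq> {}} \<subseteq> S \<union> (\<Union>c\<in>W'-W. {i\<in>U. c \<in> A i})"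
      unfolding U_def S_def V_def by auto
    then have "card {i \<in> {1..n}. A i \<inter> W' \<noteq> {}} \<le> card (S \<union> (\<Union>c\<in>W'-W. {i\<in>U. c \<in> A i}))"
      by (intro card_mono) (use fS fV U_def fW' in auto)
    also have "\<dots> \<le> card S + card (\<Union>c\<in>W'-W. {i\<in>U. c \<in> A i})" by (rule card_Un_le)
    also have "card (\<Union>c\<in>W'-W. {i\<in>U. c \<in> A i}) \<le> (\<Sum>c\<in>W'-W. card {i\<in>U. c \<in> A i})"
      by (rule card_UN_le) (use fW' in simp)
    finally have c1: "real (cov n A W') \<le> real (card S) + (\<Sum>c\<in>W'-W. real (card {i\<in>U. c \<in> A i}))"
      unfolding cov_def by (simp flip: of_nat_sum)
    have "(\<Sum>c\<in>W'-W. real (card {i\<in>U. c \<in> A i})) \<le> (\<Sum>c\<in>W'-W. real n / B)"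
      using bnd that by (intro sum_mono) auto
    also have "\<dots> = real (card (W'-W)) * (real n / B)" by simp
    also have "\<dots> \<le> real k * (real n / B)"
    proof -
      have "card (W'-W) \<le> k" using that fW' by (metis card_mono Diff_subset)
      then show ?thesis using npos Bpos by (intro mult_right_mono) auto
    qed
    also have "\<dots> \<le> real (card S)" using kS npos Bpos by (simp add: field_simps)
    finally show ?thesis using c1 by simp
  qed
  have fam: "finite {W'. W' \<subseteq> C \<and> card W' = k}" using fC by simp
  have Wmem: "W \<in> {W'. W' \<subseteq> C \<and> card W' = k}" using WC cW by simp
  have mc_ge: "cov n A W \<le> max_cov n A C k" unfolding max_cov_def
    using fam Wmem by (intro Max_ge) auto
  have mc_le: "real (max_cov n A C k) \<le> 2 * real (card S)"
  proof -
    have "max_cov n A C k \<in> (\<lambda>W'. cov n A W') ` {W'. W' \<subseteq> C \<and> card W' = k}"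
      unfolding max_cov_def using fam Wmem by (intro Max_in) auto
    then show ?thesis using covle by auto
  qed
  have Spos: "real (card S) > 0"
  proof -
    have "real k > 0" using k1 by simp
    then have "real (card S) * (B / real n) > 0" using kS by linarith
    then show ?thesis by (cases "card S = 0") auto
  qed
  have mpos: "real (max_cov n A C k) > 0" using mc_ge covW Spos by linarith
  show ?thesis unfolding representation_ratio_def covW
    using mpos mc_le by (simp add: field_simps)
qed

end
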